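(* Let $p\le1/2$ and let $g,h\colon(\{0,1\}^n,\mu_p)\to\{0,1\}$ be cross-intersecting. Then \[\mu_p(h)\mu_p(g)\le\sum_{d=1}^n\left(\frac{p}{1-p}\right)^d|\langle h^{=d},g\rangle|,\] where the inner product is with respect to $\mu_p$.
   Context: $\mu_p$ is the $p$-biased product measure on $\{0,1\}^n$, $\mu_p(f)=\mathbb{E}_{\mu_p}f$, $\langle u,v\rangle=\mathbb{E}_{\mu_p}[uv]$. With $\chi_i(x)=\frac{x_i-p}{\sqrt{p(1-p)}}$ and $\chi_S=\prod_{i\in S}\chi_i$, $\hat h(S)=\langle h,\chi_S\rangle$ and $h^{=d}=\sum_{|S|=d}\hat h(S)\chi_S$. Identifying subsets of $[n]$ with points of $\{0,1\}^n$, $g,h$ are cross-intersecting if $A\cap B\ne\emptyset$ whenever $g(A)=1$ and $h(B)=1$. *)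

theory Defs
  imports "HOL-Analysis.Analysis"
begin

text \<open>Points of the cube {0,1}^n are identified with subsets of {0..<n}.\<close>

definition cube :: "nat \<Rightarrow> nat set set" where
  "cube n = Pow {..<n}"

definition mu_weight :: "nat \<Rightarrow> real \<Rightarrow> nat set \<Rightarrow> real" where
  "mu_weight n p x = p ^ card x * (1 - p) ^ (n - card x)"

definition expect :: "nat \<Rightarrow> real \<Rightarrow> (nat set \<Rightarrow> real) \<Rightarrow> real" where
  "expect n p f = (\<Sum>x\<in>cube n. mu_weight n p x * f x)"

definition inner_p :: "nat \<Rightarrow> real \<Rightarrow> (nat set \<Rightarrow> real) \<Rightarrow> (nat set \<Rightarrow> real) \<Rightarrow> real" where
  "inner_p n p u v = expect n p (\<lambda>x. u x * v x)"

definition chi1 :: "real \<Rightarrow> nat \<Rightarrow> nat set \<Rightarrow> real" where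
  "chi1 p i x = ((if i \<in> x then 1 else 0) - p) / sqrt (p * (1 - p))"

definition chi :: "real \<Rightarrow> nat set \<Rightarrow> nat set \<Rightarrow> real" where
  "chi p S x = (\<Prod>i\<in>S. chi1 p i x)"

definition fourier :: "nat \<Rightarrow> real \<Rightarrow> (nat set \<Rightarrow> real) \<Rightarrow> nat set \<Rightarrow> real" where
  "fourier n p h S = inner_p n p h (chi p S)"

definition level :: "nat \<Rightarrow> real \<Rightarrow> nat \<Rightarrow> (nat set \<Rightarrow> real) \<Rightarrow> nat set \<Rightarrow> real" where
  "level n p d h x = (\<Sum>S\<in>{S\<in>cube n. card S = d}. fourier n p h S * chi p S x)"

definition boolean_fun :: "nat \<Rightarrow> (nat set \<Rightarrow> real) \<Rightarrow> bool" where
  "boolean_fun n f \<longleftrightarrow> (\<forall>x\<in>cube n. f x = 0 \<or> f x = 1)"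

definition cross_intersecting :: "nat \<Rightarrow> (nat set \<Rightarrow> real) \<Rightarrow> (nat set \<Rightarrow> real) \<Rightarrow> bool" where
  "cross_intersecting n g h \<longleftrightarrow>
     (\<forall>A\<in>cube n. \<forall>B\<in>cube n. g A = 1 \<longrightarrow> h B = 1 \<longrightarrow> A \<inter> B \<noteq> {})"

end

theory Submission
  imports Defs
begin

lemma pow_expand:
  fixes f :: "nat \<Rightarrow> real"
  assumes "finite A"
  shows "(\<Sum>S\<in>Pow A. \<Prod>i\<in>S. f i) = (\<Prod>i\<in>A. f i + 1)"
  using prod_add[OF assms, of f "\<lambda>_. 1"] by simp

lemma kernel_zero:
  assumes p0: "0 < p" and p1: "p < 1" and xs: "x \<subseteq> {..<n}" and ys: "y \<subseteq> {..<n}"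
    and xy: "x \<inter> y \<noteq> {}"
  shows "(\<Sum>S\<in>cube n. (-(p/(1-p)))^card S * (chi p S x * chi p S y)) = 0"
proof -
  define f where "f i = -(p/(1-p)) * (chi1 p i x * chi1 p i y)" for i
  have "(\<Sum>S\<in>cube n. (-(p/(1-p)))^card S * (chi p S x * chi p S y))
        = (\<Sum>S\<in>Pow {..<n}. \<Prod>i\<in>S. f i)"
    unfolding cube_def
    by (rule sum.cong[OF refl]) (simp only: f_def chi_def prod.distrib prod_constant)
  also have "\<dots> = (\<Prod>i\<in>{..<n}. f i + 1)" by (rule pow_expand) simp
  also have "\<dots> = 0"
  proof -
    obtain i where i: "i \<in> x" "i \<in> y" using xy by blast
    have iin: "i \<in> {..<n}" using i xs by blast
    have s: "sqrt (p*(1-p)) ^ 2 = p*(1-p)" using p0 p1 by (simp add: mult_nonneg_nonneg)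
    have "chi1 p i x * chi1 p i y = (1-p)^2 / sqrt (p*(1-p))^2"
      using i by (simp add: chi1_def power2_eq_square)
    also have "\<dots> = (1-p)/p" using s p0 p1 by (simp add: power2_eq_square field_simps)
    finally have "f i = -1" using p0 p1 unfolding f_def by (simp add: field_simps)
    then show ?thesis using iin by (intro prod_zero) (auto intro!: bexI[of _ i])
  qed
  finally show ?thesis .
qed

theorem mainTheorem17:
  fixes n :: nat and p :: real and g h :: "nat set \<Rightarrow> real"
  assumes "0 < p" and "p \<le> 1/2"
    and "boolean_fun n g" and "boolean_fun n h"
    and "cross_intersecting n g h"
  shows "expect n p h * expect n p g
           \<le> (\<Sum>d=1..n. (p / (1 - p)) ^ d * \<bar>inner_p n p (level n p d h) g\<bar>)"
proof -
  define q where "q = p / (1 - p)"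
  define \<mu> where "\<mu> = mu_weight n p"
  define c where "c S = fourier n p h S * fourier n p g S" for S
  have fin: "finite (cube n)" by (simp add: cube_def)
  have four: "fourier n p u S = (\<Sum>x\<in>cube n. \<mu> x * (u x * chi p S x))" for u S
    by (simp add: fourier_def inner_p_def expect_def \<mu>_def)
  have I: "inner_p n p (level n p d h) g = (\<Sum>S\<in>{S\<in>cube n. card S = d}. c S)" for d
  proof -
    have "inner_p n p (level n p d h) g
       = (\<Sum>x\<in>cube n. \<Sum>S\<in>{S\<in>cube n. card S = d}. fourier n p h S * (\<mu> x * (g x * chi p S x)))"
      unfolding inner_p_def expect_def level_def \<mu>_def
      by (rule sum.cong) (auto simp: sum_distrib_left sum_distrib_right ac_simps)
    also have "\<dots> = (\<Sum>S\<in>{S\<in>cube n. card S = d}. \<Sum>x\<in>cube n. fourier n p h S * (\<mu> x * (g x * chi p S x)))"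
      by (rule sum.swap)
    also have "\<dots> = (\<Sum>S\<in>{S\<in>cube n. card S = d}. c S)"
      unfolding c_def four[of g] by (simp add: sum_distrib_left)
    finally show ?thesis .
  qed
  have Z: "(\<Sum>S\<in>cube n. (-q)^card S * c S) = 0"
  proof -
    have "(\<Sum>S\<in>cube n. (-q)^card S * c S)
        = (\<Sum>S\<in>cube n. \<Sum>x\<in>cube n. \<Sum>y\<in>cube n.
             (\<mu> x * h x * (\<mu> y * g y)) * ((-q)^card S * (chi p S x * chi p S y)))"
      unfolding c_def four
      by (rule sum.cong[OF refl]) (simp add: sum_product sum_distrib_left mult_ac)
    also have "\<dots> = (\<Sum>x\<in>cube n. \<Sum>y\<in>cube n. \<Sum>S\<in>cube n.
             (\<mu> x * h x * (\<mu> y * g y)) * ((-q)^card S * (chi p S x * chi p S y)))"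
      by (subst sum.swap) (rule sum.cong[OF refl], rule sum.swap)
    also have "\<dots> = (\<Sum>x\<in>cube n. \<Sum>y\<in>cube n. (\<mu> x * h x * (\<mu> y * g y)) *
             (\<Sum>S\<in>cube n. (-q)^card S * (chi p S x * chi p S y)))"
      by (simp add: sum_distrib_left)
    also have "\<dots> = 0"
    proof (intro sum.neutral ballI)
      fix x y assume x: "x \<in> cube n" and y: "y \<in> cube n"
      show "\<mu> x * h x * (\<mu> y * g y) * (\<Sum>S\<in>cube n. (-q)^card S * (chi p S x * chi p S y)) = 0"
      proof (cases "h x = 1 \<and> g y = 1")
        case True
        then have "x \<inter> y \<noteq> {}" using assms(5) x y unfolding cross_intersecting_def by auto
        then have "(\<Sum>S\<in>cube n. (-q)^card S * (chi p S x * chi p S y)) = 0"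
          unfolding q_def using kernel_zero[of p x n y] assms(1,2) x y by (auto simp: cube_def)
        then show ?thesis by simp
      next
        case False
        then have "h x = 0 \<or> g y = 0" using assms(3,4) x y unfolding boolean_fun_def by auto
        then show ?thesis by auto
      qed
    qed
    finally show ?thesis .
  qed
  have G: "(\<Sum>S\<in>cube n. (-q)^card S * c S)
        = (\<Sum>d\<in>{0..n}. \<Sum>S\<in>{S\<in>cube n. card S = d}. (-q)^card S * c S)"
  proof -
    have "card ` cube n \<subseteq> {0..n}"
      by (auto simp: cube_def intro: card_mono[of "{..<n}", simplified])
    from sum.group[OF fin _ this, of "\<lambda>S. (-q)^card S * c S"] show ?thesis by simp
  qed
  have G2: "(\<Sum>S\<in>{S\<in>cube n. card S = d}. (-q)^card S * c S)
       = (-q)^d * inner_p n p (level n p d h) g" for d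
    unfolding I sum_distrib_left by (rule sum.cong) auto
  have c0: "{S\<in>cube n. card S = 0} = {{}}"
    using finite_subset[of _ "{..<n}"] by (auto simp: cube_def card_eq_0_iff)
  have ce: "c {} = expect n p h * expect n p g"
    unfolding c_def four by (simp add: chi_def expect_def \<mu>_def)
  have "(\<Sum>d\<in>{0..n}. (-q)^d * inner_p n p (level n p d h) g)
        = (-q)^0 * inner_p n p (level n p 0 h) g + (\<Sum>d=1..n. (-q)^d * inner_p n p (level n p d h) g)"
    by (simp add: sum.atLeast_Suc_atMost)
  moreover have "inner_p n p (level n p 0 h) g = expect n p h * expect n p g"
    using I[of 0] c0 ce by simp
  ultimately have E: "expect n p h * expect n p g = - (\<Sum>d=1..n. (-q)^d * inner_p n p (level n p d h) g)"
    using Z G G2 by simp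
  also have "\<dots> \<le> \<bar>\<Sum>d=1..n. (-q)^d * inner_p n p (level n p d h) g\<bar>" by linarith
  also have "\<dots> \<le> (\<Sum>d=1..n. \<bar>(-q)^d * inner_p n p (level n p d h) g\<bar>)" by (rule sum_abs)
  also have "\<dots> = (\<Sum>d=1..n. q^d * \<bar>inner_p n p (level n p d h) g\<bar>)"
  proof (rule sum.cong)
    fix d show "\<bar>(-q)^d * inner_p n p (level n p d h) g\<bar> = q^d * \<bar>inner_p n p (level n p d h) g\<bar>"
      using assms(1,2) by (simp add: abs_mult power_abs q_def)
  qed simp
  finally show ?thesis unfolding q_def .
qed

end
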